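(* Let $T=4$ and let $P$ be a probability distribution on pairs of binary sequences $(A,B)=(A_{1:4},B_{1:4})\in\{0,1\}^4\times\{0,1\}^4$ belonging to the class $\mathcal P_0$ of non-causal models, i.e. there exist a (possibly infinite) hidden attribute space, a probability distribution $P(R_A,R_B\mid E)$ over pairs of hidden attributes $(R_A,R_B)$, and conditional distributions such that $$P(A_{1:4},B_{1:4}\mid E)=\sum_{R_A,R_B}P(R_A,R_B\mid E)\,P(A_1\mid R_A)\,P(B_1\mid R_B)\prod_{t=2}^{4}P(A_t\mid A_{t-1},R_A)\,P(B_t\mid B_{t-1},R_B),$$ where the transitions are stationary: $P(A_t\mid A_{t-1},R_A)=P(A_{t'}\mid A_{t'-1},R_A)$ and $P(B_t\mid B_{t-1},R_B)=P(B_{t'}\mid B_{t'-1},R_B)$ for all $t,t'$ (the sum over hidden attributes being understood as an integral against a probability measure when the attribute space is infinite). Define $$c^{(1)}(A,B)=\Big(\mathbf 1\{A_2=B_2\neq A_3=B_3\}-\mathbf 1\{A_2=B_3\neq A_3=B_2\}\Big)\Big(1-\mathbf 1\{A_1\neq A_4\}\,\mathbf 1\{B_1\neq B_4\}\Big).$$ Then $\langle c^{(1)}(A,B)\rangle_P:=\sum_{A,B\in\{0,1\}^4}P(A,B\mid E)\,c^{(1)}(A,B)=0$.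
   Context: Here $A_t$ and $B_t$ denote the binary actions of two individuals (Alice and Bob) at time $t$, $E$ denotes the presence of a directed social-network edge from Alice to Bob, and $R_A,R_B$ are unobserved attributes of Alice and Bob whose joint distribution given $E$ is arbitrary. In a non-causal model, Bob's action at time $t$ depends only on his previous action and his hidden attribute (not on Alice's previous action), so $(A,B)$ is a mixture, over the hidden attributes, of products of two independent stationary (time-homogeneous) Markov chains on $\{0,1\}$. $\mathbf 1\{\cdot\}$ denotes the indicator function, and a chained condition such as $A_2=B_2\neq A_3=B_3$ means $A_2=B_2$, $A_3=B_3$ and $A_2\neq A_3$. *)

theory Defs
  imports "HOL-Probability.Probability"
begin

text \<open>Binary sequences of length 4 are lists of booleans of length 4;
  the time-t entry (t = 1..4) is xs ! (t - 1).\<close>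
definition seqs4 :: "bool list set" where
  "seqs4 = {xs. length xs = 4}"

definition is_init_dist :: "(bool \<Rightarrow> real) \<Rightarrow> bool" where
  "is_init_dist p \<longleftrightarrow> (\<forall>x. 0 \<le> p x) \<and> p False + p True = 1"

definition is_trans_kernel :: "(bool \<Rightarrow> bool \<Rightarrow> real) \<Rightarrow> bool" where
  "is_trans_kernel q \<longleftrightarrow> (\<forall>x y. 0 \<le> q x y) \<and> (\<forall>x. q x False + q x True = 1)"

definition markov4 :: "(bool \<Rightarrow> real) \<Rightarrow> (bool \<Rightarrow> bool \<Rightarrow> real) \<Rightarrow> bool list \<Rightarrow> real" where
  "markov4 p q xs = p (xs ! 0) * (\<Prod>t\<in>{2..4::nat}. q (xs ! (t - 2)) (xs ! (t - 1)))"

definition nc_prob ::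
  "('r \<times> 's) measure \<Rightarrow> ('r \<Rightarrow> bool \<Rightarrow> real) \<Rightarrow> ('r \<Rightarrow> bool \<Rightarrow> bool \<Rightarrow> real)
     \<Rightarrow> ('s \<Rightarrow> bool \<Rightarrow> real) \<Rightarrow> ('s \<Rightarrow> bool \<Rightarrow> bool \<Rightarrow> real) \<Rightarrow> bool list \<Rightarrow> bool list \<Rightarrow> real" where
  "nc_prob M pA qA pB qB a b =
     (LINT r|M. markov4 (pA (fst r)) (qA (fst r)) a * markov4 (pB (snd r)) (qB (snd r)) b)"

definition ind :: "bool \<Rightarrow> real" where
  "ind P = (if P then 1 else 0)"

text \<open>The function c^(1)(A,B), with A_t = a ! (t-1), B_t = b ! (t-1).\<close>
definition c1 :: "bool list \<Rightarrow> bool list \<Rightarrow> real" where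
  "c1 a b =
     (ind (a!1 = b!1 \<and> a!2 = b!2 \<and> a!1 \<noteq> a!2)
      - ind (a!1 = b!2 \<and> a!2 = b!1 \<and> a!1 \<noteq> a!2))
     * (1 - ind (a!0 \<noteq> a!3) * ind (b!0 \<noteq> b!3))"

end

theory Submission
  imports Defs
begin

lemma markov4_expl: "markov4 p q [x1,x2,x3,x4] = p x1 * q x1 x2 * q x2 x3 * q x3 x4"
  unfolding markov4_def by (simp add: numeral_eq_Suc atLeastAtMostSuc_conv)

lemma len4: "length xs = 4 \<Longrightarrow> xs = [xs!0, xs!1, xs!2, xs!3]"
  by (cases xs; simp; rename_tac a l; case_tac l; simp; rename_tac b l; case_tac l; simp; rename_tac c l; case_tac l; simp)

lemma sum_seqs4: "sum f seqs4 = (\<Sum>x1\<in>UNIV. \<Sum>x2\<in>UNIV. \<Sum>x3\<in>UNIV. \<Sum>x4\<in>UNIV. f [x1,x2,x3,x4])"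
proof -
  have e: "seqs4 = (\<lambda>(x1,x2,x3,x4). [x1,x2,x3,x4]) ` (UNIV \<times> UNIV \<times> UNIV \<times> UNIV)"
  proof (rule set_eqI, rule iffI)
    fix xs assume "xs \<in> seqs4"
    then have "xs = [xs!0, xs!1, xs!2, xs!3]" by (intro len4) (simp add: seqs4_def)
    then show "xs \<in> (\<lambda>(x1,x2,x3,x4). [x1,x2,x3,x4]) ` (UNIV \<times> UNIV \<times> UNIV \<times> UNIV)"
      by (intro image_eqI[where x="(xs!0, xs!1, xs!2, xs!3)"]) auto
  qed (auto simp: seqs4_def)
  have i: "inj_on (\<lambda>(x1::bool,x2::bool,x3::bool,x4::bool). [x1,x2,x3,x4]) (UNIV \<times> UNIV \<times> UNIV \<times> UNIV)"
    by (auto simp: inj_on_def)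
  show ?thesis unfolding e sum.reindex[OF i] o_def sum.cartesian_product
    by (simp only: case_prod_unfold)
qed

definition dd :: "bool list \<Rightarrow> real" where
  "dd a = ind (a!1 \<and> \<not> a!2) - ind (\<not> a!1 \<and> a!2)"
definition ee :: "bool list \<Rightarrow> real" where
  "ee a = dd a * ind (a!0 \<noteq> a!3)"

lemma c1_split: "c1 a b = dd a * dd b - ee a * ee b"
  unfolding c1_def dd_def ee_def ind_def by (cases "a!0"; cases "a!1"; cases "a!2"; cases "a!3"; cases "b!0"; cases "b!1"; cases "b!2"; cases "b!3"; simp)

lemma chain_eq:
  assumes "is_trans_kernel q"
  shows "(\<Sum>x1\<in>UNIV. \<Sum>x2\<in>UNIV. \<Sum>x3\<in>UNIV. \<Sum>x4\<in>UNIV. markov4 p q [x1,x2,x3,x4] * dd [x1,x2,x3,x4])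
       = (\<Sum>x1\<in>UNIV. \<Sum>x2\<in>UNIV. \<Sum>x3\<in>UNIV. \<Sum>x4\<in>UNIV. markov4 p q [x1,x2,x3,x4] * ee [x1,x2,x3,x4])"
proof -
  have q: "\<And>x. q x True = 1 - q x False"
    using assms by (auto simp: is_trans_kernel_def algebra_simps)
  show ?thesis
    by (simp add: markov4_expl dd_def ee_def ind_def UNIV_bool q algebra_simps)
qed

lemma chain_eq':
  assumes "is_trans_kernel q"
  shows "(\<Sum>a\<in>seqs4. markov4 p q a * dd a) = (\<Sum>a\<in>seqs4. markov4 p q a * ee a)"
  unfolding sum_seqs4 by (rule chain_eq[OF assms])

lemma pointwise:
  assumes "is_trans_kernel q" "is_trans_kernel q'"
  shows "(\<Sum>a\<in>seqs4. \<Sum>b\<in>seqs4. markov4 p q a * markov4 p' q' b * c1 a b) = 0"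
proof -
  define f where "f = markov4 p q"
  define g where "g = markov4 p' q'"
  have pt: "f a * g b * c1 a b = (f a * dd a) * (g b * dd b) - (f a * ee a) * (g b * ee b)" for a b
    unfolding c1_split by (simp only: right_diff_distrib mult.assoc mult.left_commute)
  have "(\<Sum>a\<in>seqs4. \<Sum>b\<in>seqs4. f a * g b * c1 a b)
     = (\<Sum>a\<in>seqs4. \<Sum>b\<in>seqs4. (f a * dd a) * (g b * dd b) - (f a * ee a) * (g b * ee b))"
    by (simp only: pt)
  also have "\<dots> = (\<Sum>a\<in>seqs4. f a * dd a) * (\<Sum>b\<in>seqs4. g b * dd b)
     - (\<Sum>a\<in>seqs4. f a * ee a) * (\<Sum>b\<in>seqs4. g b * ee b)"
    by (simp only: sum_subtractf sum_product)
  also have "\<dots> = 0"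
  proof -
    have h1: "(\<Sum>a\<in>seqs4. f a * dd a) = (\<Sum>a\<in>seqs4. f a * ee a)"
      unfolding f_def by (rule chain_eq'[OF assms(1)])
    have h2: "(\<Sum>a\<in>seqs4. g a * dd a) = (\<Sum>a\<in>seqs4. g a * ee a)"
      unfolding g_def by (rule chain_eq'[OF assms(2)])
    show ?thesis unfolding h1 h2 by (rule diff_self)
  qed
  finally show ?thesis unfolding f_def g_def .
qed

lemma kernel_bounds:
  assumes "is_trans_kernel q" shows "0 \<le> q x y \<and> q x y \<le> 1"
proof -
  have "0 \<le> q x False" "0 \<le> q x True" "q x False + q x True = 1"
    using assms unfolding is_trans_kernel_def by auto
  then show ?thesis by (cases y) simp_all
qed

lemma init_bounds:
  assumes "is_init_dist p" shows "0 \<le> p x \<and> p x \<le> 1"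
proof -
  have "0 \<le> p False" "0 \<le> p True" "p False + p True = 1"
    using assms unfolding is_init_dist_def by auto
  then show ?thesis by (cases x) simp_all
qed

lemma markov4_bounds:
  assumes "is_init_dist p" "is_trans_kernel q"
  shows "0 \<le> markov4 p q xs \<and> markov4 p q xs \<le> 1"
  unfolding markov4_def
  using init_bounds[OF assms(1)] kernel_bounds[OF assms(2)]
  by (auto intro!: mult_le_one prod_nonneg prod_le_1 mult_nonneg_nonneg)

theorem mainTheorem1:
  fixes M :: "('r \<times> 's) measure"
    and pA :: "'r \<Rightarrow> bool \<Rightarrow> real" and qA :: "'r \<Rightarrow> bool \<Rightarrow> bool \<Rightarrow> real"
    and pB :: "'s \<Rightarrow> bool \<Rightarrow> real" and qB :: "'s \<Rightarrow> bool \<Rightarrow> bool \<Rightarrow> real"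
    and P :: "bool list \<Rightarrow> bool list \<Rightarrow> real"
  assumes "prob_space M"
    and "\<And>ra. is_init_dist (pA ra)" and "\<And>ra. is_trans_kernel (qA ra)"
    and "\<And>rb. is_init_dist (pB rb)" and "\<And>rb. is_trans_kernel (qB rb)"
    and "\<And>x. (\<lambda>r. pA (fst r) x) \<in> borel_measurable M"
    and "\<And>x y. (\<lambda>r. qA (fst r) x y) \<in> borel_measurable M"
    and "\<And>x. (\<lambda>r. pB (snd r) x) \<in> borel_measurable M"
    and "\<And>x y. (\<lambda>r. qB (snd r) x y) \<in> borel_measurable M"
    and "\<And>a b. a \<in> seqs4 \<Longrightarrow> b \<in> seqs4 \<Longrightarrow> P a b = nc_prob M pA qA pB qB a b"
  shows "(\<Sum>a\<in>seqs4. \<Sum>b\<in>seqs4. P a b * c1 a b) = 0"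
proof -
  interpret prob_space M by fact
  let ?f = "\<lambda>a b r. markov4 (pA (fst r)) (qA (fst r)) a * markov4 (pB (snd r)) (qB (snd r)) b"
  have int: "integrable M (?f a b)" for a b
  proof (rule integrable_const_bound[where B=1])
    show "AE r in M. norm (?f a b r) \<le> 1"
      using markov4_bounds[OF assms(2,3)] markov4_bounds[OF assms(4,5)]
      by (auto intro!: mult_le_one simp: abs_mult)
    show "?f a b \<in> borel_measurable M"
      unfolding markov4_def using assms(6-9) by measurable
  qed
  have "(\<Sum>a\<in>seqs4. \<Sum>b\<in>seqs4. P a b * c1 a b)
      = (\<Sum>a\<in>seqs4. \<Sum>b\<in>seqs4. (LINT r|M. ?f a b r * c1 a b))"
    using assms(10) by (simp add: nc_prob_def)
  also have "\<dots> = (\<Sum>a\<in>seqs4. (LINT r|M. (\<Sum>b\<in>seqs4. ?f a b r * c1 a b)))"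
    by (intro sum.cong refl Bochner_Integration.integral_sum[symmetric] integrable_mult_left int)
  also have "\<dots> = (LINT r|M. (\<Sum>a\<in>seqs4. \<Sum>b\<in>seqs4. ?f a b r * c1 a b))"
    proof (rule Bochner_Integration.integral_sum[symmetric])
    fix a assume "a \<in> seqs4"
    show "integrable M (\<lambda>r. \<Sum>b\<in>seqs4. ?f a b r * c1 a b)"
      by (rule Bochner_Integration.integrable_sum) (rule integrable_mult_left[OF int])
  qed
  also have "\<dots> = (LINT r|M. 0)"
    using pointwise[OF assms(3) assms(5)] by (simp add: mult.assoc)
  finally show ?thesis by simp
qed

end
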